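(* Let $f\in\omega^{\subset\omega}$, let $n,m\geq 1$, let $U$ be an $(n+m-1)$-branching set of extensions of $f$, and let $R\subseteq U$. Then either there is an $n$-branching set of extensions of $f$ contained in $R$, or there is an $m$-branching set of extensions of $f$ contained in $U\setminus R$.
   Context: $\omega^{\subset\omega}$ is the set of partial functions from $\omega$ to $\omega$ with finite domain. For $f\in\omega^{\subset\omega}$, an $n$-branching set of extensions of $f$ of length $k$ is defined by induction on $k$: of length $1$, it is a set $U$ of $n$ functions such that for some fixed $x\notin\operatorname{dom}(f)$ each $g\in U$ satisfies $f\subseteq g$ and $\operatorname{dom}(g)=\operatorname{dom}(f)\cup\{x\}$; if $U_0$ is an $n$-branching set of extensions of $f$ of length $k$ and for each $g\in U_0$, $U_g$ is an $n$-branching set of extensions of $g$ of length $1$, then $\bigcup_{g\in U_0}U_g$ is an $n$-branching set of extensions of $f$ of length $k+1$. An $n$-branching set of extensions is one of some length $k\geq1$. *)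

theory Defs
  imports Main
begin

text \<open>Finite partial functions omega to omega are modelled as maps nat to nat option
  with finite domain. branching n f k U: U is an n-branching set of extensions of f
  of length k.\<close>

inductive branching :: "nat \<Rightarrow> (nat \<rightharpoonup> nat) \<Rightarrow> nat \<Rightarrow> (nat \<rightharpoonup> nat) set \<Rightarrow> bool"
  for n :: nat where
  base: "\<lbrakk> x \<notin> dom f; finite U; card U = n;
          \<forall>g\<in>U. f \<subseteq>\<^sub>m g \<and> dom g = dom f \<union> {x} \<rbrakk>
         \<Longrightarrow> branching n f 1 U"
| step: "\<lbrakk> branching n f k U0; \<forall>g\<in>U0. branching n g 1 (V g) \<rbrakk>
         \<Longrightarrow> branching n f (Suc k) (\<Union>g\<in>U0. V g)"

definition is_branching :: "nat \<Rightarrow> (nat \<rightharpoonup> nat) \<Rightarrow> (nat \<rightharpoonup> nat) set \<Rightarrow> bool" where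
  "is_branching n f U \<longleftrightarrow> (\<exists>k\<ge>1. branching n f k U)"

end

theory Submission
  imports Defs
begin

lemma branching_pos: "branching n f k U \<Longrightarrow> k \<ge> 1"
  by (induction rule: branching.induct) auto

lemma branching_one_inv:
  assumes "branching N g 1 V"
  shows "\<exists>x. x \<notin> dom g \<and> finite V \<and> card V = N \<and> (\<forall>h\<in>V. g \<subseteq>\<^sub>m h \<and> dom h = dom g \<union> {x})"
  using assms
proof (cases rule: branching.cases)
  case (base x)
  then show ?thesis by blast
next
  case (step k U0 W)
  then have "k = 0" by simp
  with step(3) have "branching N g 0 U0" by simp
  from branching_pos[OF this] show ?thesis by simp
qed

lemma one_step:
  assumes "branching N g 1 V" "S \<subseteq> V" "card S = n"
  shows "branching n g 1 S"
proof -
  obtain x where x: "x \<notin> dom g" "finite V" "card V = N"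
    "\<forall>h\<in>V. g \<subseteq>\<^sub>m h \<and> dom h = dom g \<union> {x}"
    using branching_one_inv[OF assms(1)] by blast
  show ?thesis
  proof (rule branching.base[of x])
    show "x \<notin> dom g" by (rule x(1))
    show "finite S" using x(2) assms(2) by (rule finite_subset[rotated])
    show "card S = n" by (rule assms(3))
    show "\<forall>h\<in>S. g \<subseteq>\<^sub>m h \<and> dom h = dom g \<union> {x}"
    proof (intro ballI)
      fix h assume h: "h \<in> S"
      show "g \<subseteq>\<^sub>m h \<and> dom h = dom g \<union> {x}" using x(4) subsetD[OF assms(2) h] by (rule bspec)
    qed
  qed
qed

lemma pigeon:
  assumes "branching (n + m - 1) g 1 V" "n \<ge> 1" "\<not> n \<le> card (V \<inter> R)"
  shows "m \<le> card (V - R)"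
proof -
  obtain x where x: "finite V" "card V = n + m - 1"
    using branching_one_inv[OF assms(1)] by blast
  have "card V = card (V \<inter> R) + card (V - R)"
    using x(1) by (rule card_Int_Diff)
  then show ?thesis using x assms by linarith
qed

lemma pick:
  assumes "n \<le> card A" "finite A"
  shows "(SOME S. S \<subseteq> A \<and> card S = n) \<subseteq> A \<and> card (SOME S. S \<subseteq> A \<and> card S = n) = n"
proof -
  obtain S where "S \<subseteq> A" "card S = n"
    using obtain_subset_with_card_n[OF assms(1)] by blast
  then have "\<exists>S. S \<subseteq> A \<and> card S = n" by blast
  from someI_ex[OF this] show ?thesis .
qed

lemma main:
  assumes "branching N f k U" "N = n + m - 1" "n \<ge> 1" "m \<ge> 1"
  shows "(\<exists>V. is_branching n f V \<and> V \<subseteq> U \<inter> R) \<or> (\<exists>V. is_branching m f V \<and> V \<subseteq> U - R)"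
  using assms
proof (induction arbitrary: R rule: branching.induct)
  case (base x f U)
  have b1: "branching N f 1 U" using base(1-4) by (rule branching.base)
  show ?case
  proof (cases "n \<le> card (U \<inter> R)")
    case True
    obtain S where S: "S \<subseteq> U \<inter> R" "card S = n"
      using obtain_subset_with_card_n[OF True] by blast
    have "branching n f 1 S" using one_step[OF b1 _ S(2)] S(1) by blast
    then show ?thesis using S unfolding is_branching_def by blast
  next
    case False
    have "m \<le> card (U - R)" using pigeon[OF _ base(6) False] b1 base(5) by simp
    then obtain S where S: "S \<subseteq> U - R" "card S = m"
      using obtain_subset_with_card_n by blast
    have "branching m f 1 S" using one_step[OF b1 _ S(2)] S(1) by blast
    then show ?thesis using S unfolding is_branching_def by blast
  qed
next
  case (step f k U0 V)
  have VB: "branching N g 1 (V g)" if "g \<in> U0" for g using step(3) that by blast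
  define red where "red = {g\<in>U0. n \<le> card (V g \<inter> R)}"
  have fin: "finite (V g)" if "g \<in> U0" for g
    using branching_one_inv[OF VB[OF that]] by blast
  from step(2)[OF step(4,5,6), of red]
  show ?case
  proof
    assume "\<exists>W. is_branching n f W \<and> W \<subseteq> U0 \<inter> red"
    then obtain W k' where W: "branching n f k' W" "W \<subseteq> U0 \<inter> red"
      unfolding is_branching_def by blast
    define S where "S g = (SOME S. S \<subseteq> V g \<inter> R \<and> card S = n)" for g
    have S: "S g \<subseteq> V g \<inter> R \<and> card (S g) = n" if "g \<in> W" for g
      unfolding S_def using that W(2) fin by (intro pick) (auto simp: red_def)
    have "branching n f (Suc k') (\<Union>g\<in>W. S g)"
    proof (rule branching.step[OF W(1)], intro ballI)
      fix g assume g: "g \<in> W"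
      show "branching n g 1 (S g)"
        using one_step[of N g "V g" "S g" n] VB g W(2) S[OF g] step.prems(1) by auto
    qed
    moreover have "(\<Union>g\<in>W. S g) \<subseteq> (\<Union>g\<in>U0. V g) \<inter> R" using S W(2) by blast
    ultimately show ?thesis unfolding is_branching_def by (intro disjI1) auto
  next
    assume "\<exists>W. is_branching m f W \<and> W \<subseteq> U0 - red"
    then obtain W k' where W: "branching m f k' W" "W \<subseteq> U0 - red"
      unfolding is_branching_def by blast
    define S where "S g = (SOME S. S \<subseteq> V g - R \<and> card S = m)" for g
    have S: "S g \<subseteq> V g - R \<and> card (S g) = m" if "g \<in> W" for g
    proof -
      have gU: "g \<in> U0" "\<not> n \<le> card (V g \<inter> R)" using that W(2) by (auto simp: red_def)
      have "m \<le> card (V g - R)"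
        using pigeon[of n m g "V g" R] VB gU step.prems(1,2) by auto
      then show ?thesis unfolding S_def using fin gU by (intro pick) auto
    qed
    have "branching m f (Suc k') (\<Union>g\<in>W. S g)"
    proof (rule branching.step[OF W(1)], intro ballI)
      fix g assume g: "g \<in> W"
      show "branching m g 1 (S g)"
        using one_step[of N g "V g" "S g" m] VB g W(2) S[OF g] step.prems(1) by auto
    qed
    moreover have "(\<Union>g\<in>W. S g) \<subseteq> (\<Union>g\<in>U0. V g) - R" using S W(2) by blast
    ultimately show ?thesis unfolding is_branching_def by (intro disjI2) auto
  qed
qed

theorem mainTheorem7:
  fixes f :: "nat \<rightharpoonup> nat" and n m :: nat
    and U R :: "(nat \<rightharpoonup> nat) set"
  assumes "finite (dom f)" and "n \<ge> 1" and "m \<ge> 1"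
    and "is_branching (n + m - 1) f U"
    and "R \<subseteq> U"
  shows "(\<exists>V. is_branching n f V \<and> V \<subseteq> R) \<or> (\<exists>V. is_branching m f V \<and> V \<subseteq> U - R)"
proof -
  obtain k where "branching (n + m - 1) f k U" using assms(4) unfolding is_branching_def by blast
  from main[OF this refl assms(2,3), of R] show ?thesis using assms(5) by blast
qed

end
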